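(* Let $n\ge1$. On the class $\mathcal S_n\setminus\{\mathbb R^n,\emptyset\}$, the map $K\mapsto K^c$ is an isometry with respect to the Hausdorff distance, i.e. $d_H(K^c,L^c)=d_H(K,L)$ for all $K,L\in\mathcal S_n\setminus\{\mathbb R^n,\emptyset\}$.
   Context: $B(x,r)$ is the closed Euclidean ball and $B=B(0,1)$. For $A\subseteq\mathbb R^n$, $A^c=\bigcap_{x\in A}B(x,1)$. $\mathcal S_n$ is the class of all sets of the form $\bigcap_{x\in A}B(x,1)$, $A\subseteq\mathbb R^n$. The Hausdorff distance of compact convex sets $K,L$ is $d_H(K,L)=\inf\{\lambda\ge0:K\subseteq L+\lambda B,\ L\subseteq K+\lambda B\}=\sup_{u\in S^{n-1}}|h_K(u)-h_L(u)|$, where $h_K$ is the support function. *)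

theory Defs
  imports "HOL-Analysis.Analysis"
begin

definition ball_dual :: "'a::euclidean_space set \<Rightarrow> 'a set" where
  "ball_dual A = (\<Inter>x\<in>A. cball x 1)"

definition spindle_class :: "'a::euclidean_space set set" where
  "spindle_class = {ball_dual A | A. True}"

definition hausdorff_dist :: "'a::euclidean_space set \<Rightarrow> 'a set \<Rightarrow> real" where
  "hausdorff_dist K L = Inf {r. r \<ge> 0 \<and>
      K \<subseteq> {y + v | y v. y \<in> L \<and> v \<in> cball 0 r} \<and>
      L \<subseteq> {y + v | y v. y \<in> K \<and> v \<in> cball 0 r}}"

end

theory Submission
  imports Defs
begin

lemma spindle_alg:
  fixes e r w :: "'a::real_inner"
  assumes r1: "norm r \<le> 1" and er1: "norm (e - r) \<le> 1" and sg: "\<sigma> > 0" and b0: "0 \<le> b" and b1: "b \<le> 1 + \<sigma>"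
    and c: "(norm w)^2 + \<sigma>*((norm (b *\<^sub>R e + w))^2 - b*(norm e)^2) + \<sigma>^2 \<le> 0"
  shows "norm (b *\<^sub>R e + w - r) \<le> 1"
proof -
  define N where "N = (norm (b *\<^sub>R e + w))^2"
  define R where "R = (norm r)^2"
  define E where "E = (norm e)^2"
  define P where "P = inner e r"
  define Q where "Q = inner w r"
  define W where "W = (norm w)^2"
  have hR: "R \<le> 1" unfolding R_def using r1 by (simp add: power_le_one)
  have hER: "E - 2*P + R \<le> 1"
  proof -
    have "(norm (e - r))^2 \<le> 1" using er1 by (simp add: power_le_one)
    moreover have "(norm (e - r))^2 = E - 2*P + R"
      unfolding E_def P_def R_def power2_norm_eq_inner by (simp add: inner_diff inner_commute)
    ultimately show ?thesis by simp
  qed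
  have ha: "(norm (b *\<^sub>R e + w - r))^2 = N - 2*b*P - 2*Q + R"
    unfolding N_def P_def Q_def R_def power2_norm_eq_inner
    by (simp add: inner_diff inner_add inner_commute algebra_simps)
  have hb1: "(1+\<sigma>-b)*(R-1) \<le> 0" using hR b1 by (simp add: mult_nonneg_nonpos)
  have hb2: "b*(E - 2*P + R - 1) \<le> 0" using hER b0 by (simp add: mult_nonneg_nonpos)
  have hc0: "0 \<le> (norm (\<sigma> *\<^sub>R r + w))^2" by simp
  have hc1: "(norm (\<sigma> *\<^sub>R r + w))^2 = \<sigma>^2*R + 2*\<sigma>*Q + W"
    unfolding W_def Q_def R_def power2_norm_eq_inner
    by (simp add: inner_add inner_commute algebra_simps power2_eq_square)
  have hc: "-2*Q \<le> \<sigma>*R + W/\<sigma>"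
  proof -
    have "0 \<le> \<sigma>^2*R + 2*\<sigma>*Q + W" using hc0 hc1 by simp
    moreover have "(\<sigma>*R + 2*Q + W/\<sigma>) * \<sigma> = \<sigma>^2*R + 2*\<sigma>*Q + W" using sg by (simp add: field_simps power2_eq_square)
    ultimately have "0 \<le> (\<sigma>*R + 2*Q + W/\<sigma>) * \<sigma>" by simp
    hence "0 \<le> \<sigma>*R + 2*Q + W/\<sigma>" using sg by (simp add: zero_le_mult_iff)
    thus ?thesis by linarith
  qed
  have hd: "W/\<sigma> + N + \<sigma> - b*E \<le> 0"
  proof -
    have "W + \<sigma>*(N - b*E) + \<sigma>^2 \<le> 0" using c unfolding W_def N_def E_def by simp
    moreover have "(W/\<sigma> + N + \<sigma> - b*E) * \<sigma> = W + \<sigma>*(N - b*E) + \<sigma>^2" using sg by (simp add: field_simps power2_eq_square)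
    ultimately have "(W/\<sigma> + N + \<sigma> - b*E) * \<sigma> \<le> 0" by simp
    thus ?thesis using sg by (simp add: mult_le_0_iff)
  qed
  have "(norm (b *\<^sub>R e + w - r))^2 \<le> 1"
    using ha hb1 hb2 hc hd by (simp add: algebra_simps) 
  thus ?thesis by (simp add: power_le_one_iff)
qed

lemma closed_ball_dual: "closed (ball_dual A)"
  unfolding ball_dual_def by (auto intro!: closed_INT)

lemma convex_ball_dual: "convex (ball_dual A)"
  unfolding ball_dual_def by (auto intro!: convex_INT)

lemma mem_ball_dual: "x \<in> ball_dual A \<longleftrightarrow> (\<forall>a\<in>A. dist a x \<le> 1)"
  unfolding ball_dual_def by auto

lemma sub_ball_dual2: "A \<subseteq> ball_dual (ball_dual A)"
  by (auto simp: mem_ball_dual) (metis dist_commute)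

lemma ball_dual_anti: "A \<subseteq> B \<Longrightarrow> ball_dual B \<subseteq> ball_dual A"
  unfolding ball_dual_def by auto

lemma ball_dual3: "ball_dual (ball_dual (ball_dual A)) = ball_dual A"
  by (meson ball_dual_anti sub_ball_dual2 subset_antisym)

lemma main_M:
  fixes A :: "'a::euclidean_space set"
  assumes "A \<noteq> {}" and KA: "K = ball_dual A" and Kx: "K \<subseteq> cball x (1+l)" and l0: "0 \<le> l"
  shows "\<exists>z \<in> ball_dual K. dist x z \<le> l"
proof (rule ccontr)
  assume neg: "\<not> ?thesis"
  define C where "C = ball_dual K"
  have cC: "closed C" "convex C" unfolding C_def by (rule closed_ball_dual, rule convex_ball_dual)
  have AC: "A \<subseteq> C" unfolding C_def KA by (rule sub_ball_dual2)
  hence Cne: "C \<noteq> {}" using assms(1) by auto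
  define z where "z = closest_point C x"
  have zC: "z \<in> C" unfolding z_def using closest_point_in_set[OF cC(1) Cne] .
  have zmin: "\<forall>y\<in>C. dist x z \<le> dist x y" unfolding z_def using closest_point_exists(2)[OF cC(1) Cne] .
  have dot: "\<And>y. y \<in> C \<Longrightarrow> inner (x - z) (y - z) \<le> 0"
    using any_closest_point_dot[OF cC(2) cC(1) zC _ zmin] by blast
  define d where "d = dist x z"
  have dl: "d > l" using neg zC unfolding d_def C_def by force
  hence d0: "d > 0" using l0 by simp
  define u where "u = (1/d) *\<^sub>R (x - z)"
  have xzu: "x - z = d *\<^sub>R u" unfolding u_def using d0 by simp
  have nu: "norm u = 1" unfolding u_def d_def using d0 d_def by (simp add: dist_norm)
  have uu: "inner u u = 1" using nu by (metis power2_norm_eq_inner power_one)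
  define p where "p = z - u"
  have pK: "p \<in> K"
    unfolding KA mem_ball_dual
  proof
    fix a assume aA: "a \<in> A"
    show "dist a p \<le> 1"
    proof (rule ccontr)
      assume far: "\<not> dist a p \<le> 1"
      have aC: "a \<in> C" using aA AC by auto
      define e where "e = a - z"
      define sv where "sv = inner e u"
      define E where "E = (norm e)^2"
      have "inner (d *\<^sub>R u) e \<le> 0" using dot[OF aC] xzu unfolding e_def by simp
      hence s0: "sv \<le> 0" unfolding sv_def using d0 by (simp add: inner_commute mult_le_0_iff)
      have "1 < (norm (e + u))^2"
      proof -
        have eq: "a - (z - u) = e + u" unfolding e_def by simp
        have "1 < norm (e + u)" using far unfolding p_def dist_norm eq by simp
        thus ?thesis by (simp add: one_less_power)
      qed
      moreover have "(norm (e + u))^2 = E + 2 * sv + 1"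
        unfolding E_def sv_def power2_norm_eq_inner
        by (simp add: inner_add inner_commute uu)
      ultimately have Es: "E + 2 * sv > 0" by simp
      hence E0: "E > 0" using s0 by simp
      define b0 where "b0 = 2/E"
      define \<mu> where "\<mu> = (E - 2 * sv)/(2*E)"
      define D where "D = (norm (b0 *\<^sub>R e + \<mu> *\<^sub>R u))^2"
      define \<sigma> where "\<sigma> = min ((1-\<mu>^2)/(D+1)) (E/2)"
      have mu0: "\<mu> > 0" unfolding \<mu>_def using E0 s0 by simp
      have mu1: "\<mu> < 1" unfolding \<mu>_def using E0 Es by (simp add: field_simps)
      have mu2: "\<mu>^2 < 1" using mu0 mu1 by (simp add: power_less_one_iff abs_less_iff)
      have D0: "D \<ge> 0" unfolding D_def by simp
      have sg: "\<sigma> > 0" unfolding \<sigma>_def using mu2 D0 E0 by simp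
      have sD: "\<sigma> * D \<le> 1 - \<mu>^2"
      proof -
        have "\<sigma> * D \<le> (1-\<mu>^2)/(D+1) * D" unfolding \<sigma>_def using D0 by (intro mult_right_mono) auto
        also have "\<dots> \<le> 1 - \<mu>^2" using D0 mu2 by (simp add: field_simps)
        finally show ?thesis .
      qed
      define b where "b = \<sigma> * b0"
      define w where "w = (\<sigma> * \<mu>) *\<^sub>R u"
      have b0': "0 \<le> b" unfolding b_def b0_def using sg E0 by simp
      have b1: "b \<le> 1 + \<sigma>"
      proof -
        have "\<sigma> \<le> E/2" unfolding \<sigma>_def by (rule min.cobounded2)
        hence "b \<le> 1" unfolding b_def b0_def using E0 by (simp add: field_simps)
        thus ?thesis using sg by simp
      qed
      have bew: "b *\<^sub>R e + w = \<sigma> *\<^sub>R (b0 *\<^sub>R e + \<mu> *\<^sub>R u)"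
        unfolding b_def w_def by (simp add: scaleR_add_right)
      have cond: "(norm w)^2 + \<sigma>*((norm (b *\<^sub>R e + w))^2 - b*(norm e)^2) + \<sigma>^2 \<le> 0"
      proof -
        have "(norm w)^2 = \<sigma>^2 * \<mu>^2" unfolding w_def using nu by (simp add: power_mult_distrib)
        moreover have "(norm (b *\<^sub>R e + w))^2 = \<sigma>^2 * D" unfolding bew D_def using sg
          by (simp add: power_mult_distrib)
        moreover have "b*(norm e)^2 = 2*\<sigma>" unfolding b_def b0_def E_def[symmetric] using E0 by simp
        ultimately have "(norm w)^2 + \<sigma>*((norm (b *\<^sub>R e + w))^2 - b*(norm e)^2) + \<sigma>^2
            = \<sigma>^2 * (\<mu>^2 - 1 + \<sigma> * D)" by (simp add: algebra_simps power2_eq_square)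
        also have "\<dots> \<le> 0" using sD by (simp add: mult_nonneg_nonpos)
        finally show ?thesis .
      qed
      define y where "y = z + (b *\<^sub>R e + w)"
      have yC: "y \<in> C"
        unfolding C_def mem_ball_dual
      proof
        fix k assume kK: "k \<in> K"
        have r1: "norm (k - z) \<le> 1" using zC kK unfolding C_def mem_ball_dual dist_norm by auto
        have r2: "norm (e - (k - z)) \<le> 1" using aC kK unfolding C_def mem_ball_dual dist_norm e_def
          by (auto simp: norm_minus_commute)
        have "norm (b *\<^sub>R e + w - (k - z)) \<le> 1"
          by (rule spindle_alg[OF r1 r2 sg b0' b1 cond])
        thus "dist k y \<le> 1" unfolding y_def dist_norm
          by (simp add: norm_minus_commute algebra_simps)
      qed
      have "inner (x - z) (y - z) \<le> 0" using dot[OF yC] .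
      moreover have "inner (x - z) (y - z) = d * \<sigma> * (b0 * sv + \<mu>)"
        unfolding xzu y_def bew sv_def
        by (simp add: inner_add_right inner_commute uu algebra_simps)
      moreover have "b0 * sv + \<mu> > 0"
        unfolding b0_def \<mu>_def using E0 Es by (simp add: field_simps)
      ultimately show False using d0 sg by (simp add: mult_le_0_iff zero_less_mult_iff)
    qed
  qed
  hence "dist x p \<le> 1 + l" using Kx by auto
  moreover have "x - p = (d + 1) *\<^sub>R u" unfolding p_def using xzu by (simp add: algebra_simps)
  hence "dist x p = d + 1" using nu d0 by (simp add: dist_norm)
  ultimately show False using dl by simp
qed

lemma G1:
  fixes A K L :: "'a::euclidean_space set"
  assumes "A \<noteq> {}" "K = ball_dual A" "0 \<le> r"
    and KL: "K \<subseteq> {y + v | y v. y \<in> L \<and> v \<in> cball 0 r}"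
  shows "ball_dual L \<subseteq> {y + v | y v. y \<in> ball_dual K \<and> v \<in> cball 0 r}"
proof
  fix x assume xL: "x \<in> ball_dual L"
  have "K \<subseteq> cball x (1 + r)"
  proof
    fix k assume "k \<in> K"
    then obtain y v where k: "k = y + v" "y \<in> L" "v \<in> cball 0 r" using KL by blast
    have "dist y x \<le> 1" using xL k(2) unfolding mem_ball_dual by auto
    moreover have "norm v \<le> r" using k(3) by simp
    ultimately have "dist x k \<le> 1 + r"
    proof -
      have "norm (x - (y + v)) \<le> norm (x - y) + norm v"
        using norm_triangle_ineq4[of "x - y" v] by (simp add: algebra_simps)
      moreover have "norm (x - y) \<le> 1" using \<open>dist y x \<le> 1\<close> by (simp add: dist_norm norm_minus_commute)
      ultimately show ?thesis using \<open>norm v \<le> r\<close> by (simp add: k(1) dist_norm)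
    qed
    thus "k \<in> cball x (1 + r)" by simp
  qed
  then obtain z where z: "z \<in> ball_dual K" "dist x z \<le> r" using main_M[OF assms(1,2) _ assms(3)] by blast
  have "x = z + (x - z)" by simp
  moreover have "x - z \<in> cball 0 r" using z(2) by (simp add: dist_norm norm_minus_commute)
  ultimately show "x \<in> {y + v | y v. y \<in> ball_dual K \<and> v \<in> cball 0 r}" using z(1) by blast
qed

lemma spindle_rep:
  assumes "K \<in> spindle_class" "K \<noteq> UNIV"
  obtains A where "A \<noteq> {}" "K = ball_dual A"
proof -
  obtain A where "K = ball_dual A" using assms(1) unfolding spindle_class_def by blast
  moreover have "A \<noteq> {}" using assms(2) calculation unfolding ball_dual_def by auto
  ultimately show ?thesis using that by blast
qed

theorem proposition2p4:
  fixes K L :: "'a::euclidean_space set"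
  assumes "K \<in> spindle_class" and "K \<noteq> UNIV" and "K \<noteq> {}"
      and "L \<in> spindle_class" and "L \<noteq> UNIV" and "L \<noteq> {}"
  shows "hausdorff_dist (ball_dual K) (ball_dual L) = hausdorff_dist K L"
proof -
  obtain A where A: "A \<noteq> {}" "K = ball_dual A" using spindle_rep[OF assms(1,2)] by blast
  obtain B where B: "B \<noteq> {}" "L = ball_dual B" using spindle_rep[OF assms(4,5)] by blast
  have KK: "ball_dual (ball_dual K) = K" using A(2) ball_dual3 by blast
  have LL: "ball_dual (ball_dual L) = L" using B(2) ball_dual3 by blast
  have "{r. r \<ge> 0 \<and>
      ball_dual K \<subseteq> {y + v | y v. y \<in> ball_dual L \<and> v \<in> cball 0 r} \<and>
      ball_dual L \<subseteq> {y + v | y v. y \<in> ball_dual K \<and> v \<in> cball 0 r}}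
    = {r. r \<ge> 0 \<and>
      K \<subseteq> {y + v | y v. y \<in> L \<and> v \<in> cball 0 r} \<and>
      L \<subseteq> {y + v | y v. y \<in> K \<and> v \<in> cball 0 r}}" (is "?S1 = ?S2")
  proof
    show "?S2 \<subseteq> ?S1"
    proof
      fix r assume "r \<in> ?S2"
      hence r: "r \<ge> 0" "K \<subseteq> {y + v | y v. y \<in> L \<and> v \<in> cball 0 r}"
        "L \<subseteq> {y + v | y v. y \<in> K \<and> v \<in> cball 0 r}" by auto
      have "ball_dual L \<subseteq> {y + v | y v. y \<in> ball_dual K \<and> v \<in> cball 0 r}"
        by (rule G1[OF A(1,2) r(1) r(2)])
      moreover have "ball_dual K \<subseteq> {y + v | y v. y \<in> ball_dual L \<and> v \<in> cball 0 r}"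
        by (rule G1[OF B(1,2) r(1) r(3)])
      ultimately show "r \<in> ?S1" using r(1) by blast
    qed
  next
    show "?S1 \<subseteq> ?S2"
    proof
      fix r assume "r \<in> ?S1"
      hence r: "r \<ge> 0" "ball_dual K \<subseteq> {y + v | y v. y \<in> ball_dual L \<and> v \<in> cball 0 r}"
        "ball_dual L \<subseteq> {y + v | y v. y \<in> ball_dual K \<and> v \<in> cball 0 r}" by auto
      have "L \<subseteq> {y + v | y v. y \<in> K \<and> v \<in> cball 0 r}"
        using G1[OF assms(3) refl r(1) r(2)] unfolding KK LL .
      moreover have "K \<subseteq> {y + v | y v. y \<in> L \<and> v \<in> cball 0 r}"
        using G1[OF assms(6) refl r(1) r(3)] unfolding KK LL .
      ultimately show "r \<in> ?S2" using r(1) by blast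
    qed
  qed
  thus ?thesis unfolding hausdorff_dist_def by simp
qed

end
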